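(* Let $k \geq 1$ be an integer, let $A : \mathbb{Z} \to V$ be an array (any function from integers to some value set $V$), let $R$ be any predicate on pairs $(v,(x_1,\ldots,x_k)) \in V \times \mathbb{Z}^k$, and let $C$ be any predicate on $\mathbb{Z}^k$. Let $a_1,\ldots,a_k, b \in \mathbb{Z}$, let $\mathit{min}_1,\ldots,\mathit{min}_k \in \mathbb{Z}$ and $\mathit{max}_k \in \mathbb{Z}$, and put $n_k = \mathit{max}_k - \mathit{min}_k$. Define $$X(x_1,\ldots,x_k) \;=\; C(x_1,\ldots,x_k) \wedge \bigwedge_{i=1}^k (\mathit{min}_i \leq x_i) \wedge x_k < \mathit{max}_k,$$ and $f(x_1,\ldots,x_k) = \sum_{i=1}^k a_i x_i + b$. Define $\mathit{off} = \sum_{i=1}^k a_i\,\mathit{min}_i + b$, and for $x \in \mathbb{Z}$ define $\mathit{base}_k(x) = |x - \mathit{off}|$ and $\mathit{base}_i(x) = \mathit{base}_{i+1}(x) \bmod a_{i+1}$ for $1 \leq i < k$. Define $$f^{-1}(x) = \big(\mathit{base}_1(x)/|a_1| + \mathit{min}_1,\ \ldots,\ \mathit{base}_k(x)/|a_k| + \mathit{min}_k\big)$$ and $$Y(x) = C(f^{-1}(x)) \wedge \mathit{base}_1(x) \bmod a_1 = 0 \wedge \big(a_1 > 0 \Rightarrow 0 \leq x - \mathit{off} < a_k n_k\big) \wedge \big(a_1 < 0 \Rightarrow a_k n_k < x - \mathit{off} \leq 0\big).$$ Assume: (1) $n_k > 0$; (2) $a_i \neq 0$ for all $1 \leq i \leq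 k$; (3) for all $1 \leq i < k$, $a_i \geq 0 \iff a_{i+1} \geq 0$; (4) for all $1 \leq i < k$ and all $(x_1,\ldots,x_k) \in \mathbb{Z}^k$ with $X(x_1,\ldots,x_k)$, $\sum_{j=1}^{i} |a_j|\,(x_j - \mathit{min}_j) < |a_{i+1}|$. Then $$\Big(\forall (x_1,\ldots,x_k) \in \mathbb{Z}^k.\ X(x_1,\ldots,x_k) \Rightarrow R\big(A[f(x_1,\ldots,x_k)],(x_1,\ldots,x_k)\big)\Big) \iff \Big(\forall x \in \mathbb{Z}.\ Y(x) \Rightarrow R\big(A[x], f^{-1}(x)\big)\Big).$$
   Context: All quantities are integers. For an integer $u \geq 0$ and a nonzero integer $a$, $u \bmod a$ denotes the remainder of $u$ modulo $|a|$, i.e. the unique $r$ with $0 \leq r < |a|$ and $u \equiv r \pmod{|a|}$, and $u/|a|$ denotes integer division discarding the remainder (note all $\mathit{base}_i(x)$ are nonnegative). $A[y]$ denotes the value of the array $A$ at index $y$. The theorem expresses that a nested quantifier over $x_1,\ldots,x_k$ indexing $A$ by a linear expression is equivalent to a single quantifier over the index $x$. *)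

theory Defs
  imports Main
begin

text \<open>Tuples in Z^k are int lists of length k; component x_i is xs ! (i - 1).
  Coefficients a_i and lower bounds min_i are functions indexed by 1..k.\<close>

function base :: "(nat \<Rightarrow> int) \<Rightarrow> nat \<Rightarrow> int \<Rightarrow> nat \<Rightarrow> int \<Rightarrow> int" where
  "base a k off i x =
     (if k \<le> i then \<bar>x - off\<bar> else base a k off (Suc i) x mod \<bar>a (Suc i)\<bar>)"
  by auto
termination by (relation "measure (\<lambda>(a, k, off, i, x). k - i)") auto

declare base.simps [simp del]

definition finv :: "(nat \<Rightarrow> int) \<Rightarrow> (nat \<Rightarrow> int) \<Rightarrow> nat \<Rightarrow> int \<Rightarrow> int \<Rightarrow> int list" where
  "finv a mn k off x = map (\<lambda>i. base a k off i x div \<bar>a i\<bar> + mn i) [1..<Suc k]"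

end

theory Submission
  imports Defs
begin

theorem theorem1:
  fixes k :: nat and A :: "int \<Rightarrow> 'v" and R :: "'v \<Rightarrow> int list \<Rightarrow> bool"
    and C :: "int list \<Rightarrow> bool" and a mn :: "nat \<Rightarrow> int" and b mx :: int
  defines "nk \<equiv> mx - mn k"
    and "X \<equiv> (\<lambda>xs. C xs \<and> (\<forall>i\<in>{1..k}. mn i \<le> xs ! (i - 1)) \<and> xs ! (k - 1) < mx)"
    and "f \<equiv> (\<lambda>xs. (\<Sum>i = 1..k. a i * xs ! (i - 1)) + b)"
    and "off \<equiv> (\<Sum>i = 1..k. a i * mn i) + b"
  defines "Y \<equiv> (\<lambda>x. C (finv a mn k off x)
               \<and> base a k off 1 x mod \<bar>a 1\<bar> = 0
               \<and> (a 1 > 0 \<longrightarrow> 0 \<le> x - off \<and> x - off < a k * nk)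
               \<and> (a 1 < 0 \<longrightarrow> a k * nk < x - off \<and> x - off \<le> 0))"
  assumes k1: "k \<ge> 1"
    and nk0: "nk > 0"
    and anz: "\<forall>i\<in>{1..k}. a i \<noteq> 0"
    and asg: "\<forall>i. 1 \<le> i \<and> i < k \<longrightarrow> (a i \<ge> 0 \<longleftrightarrow> a (i + 1) \<ge> 0)"
    and abd: "\<forall>i. 1 \<le> i \<and> i < k \<longrightarrow> (\<forall>xs. length xs = k \<and> X xs \<longrightarrow>
           (\<Sum>j = 1..i. \<bar>a j\<bar> * (xs ! (j - 1) - mn j)) < \<bar>a (i + 1)\<bar>)"
  shows "(\<forall>xs. length xs = k \<and> X xs \<longrightarrow> R (A (f xs)) xs)
     \<longleftrightarrow> (\<forall>x. Y x \<longrightarrow> R (A x) (finv a mn k off x))"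
proof -
  define sg where "sg = (if a 1 > 0 then (1::int) else -1)"
  have sgp: "a i > 0 \<longleftrightarrow> a 1 > 0" if "1 \<le> i" "i \<le> k" for i
  proof -
    have "i \<le> k \<longrightarrow> (a i > 0 \<longleftrightarrow> a 1 > 0)" using that(1)
    proof (induction i rule: dec_induct)
      case base then show ?case by simp
    next
      case (step n)
      show ?case
      proof
        assume "Suc n \<le> k"
        then have h: "n < k" "1 \<le> n" "a n \<noteq> 0" "a (Suc n) \<noteq> 0"
          using step(1) anz by auto
        then have "a n \<ge> 0 \<longleftrightarrow> a (Suc n) \<ge> 0" using asg by auto
        then show "a (Suc n) > 0 \<longleftrightarrow> a 1 > 0" using step(3) h by auto
      qed
    qed
    then show ?thesis using that by auto
  qed
  have sgn_i: "a i = sg * \<bar>a i\<bar>" if "1 \<le> i" "i \<le> k" for i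
    using sgp[OF that] anz that unfolding sg_def by auto
  have bnn: "base a k off i x \<ge> 0" if "1 \<le> i" for i x
    using anz k1 by (subst base.simps) (auto simp: that)
  have bsimp: "base a k off i x = base a k off (Suc i) x mod \<bar>a (Suc i)\<bar>" if "i < k" for i x
    using that by (subst base.simps) simp
  have bk: "base a k off k x = \<bar>x - off\<bar>" for x by (subst base.simps) simp
  have finv_nth: "finv a mn k off x ! (i - 1) = base a k off i x div \<bar>a i\<bar> + mn i"
    if "1 \<le> i" "i \<le> k" for i x
  proof -
    have "[1..<Suc k] ! (i - 1) = i" using that by (subst nth_upt) auto
    then show ?thesis using that unfolding finv_def by (subst nth_map) auto
  qed
  have len: "length (finv a mn k off x) = k" for x unfolding finv_def by simp
  show ?thesis
  proof
    assume L: "\<forall>xs. length xs = k \<and> X xs \<longrightarrow> R (A (f xs)) xs"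
    show "\<forall>x. Y x \<longrightarrow> R (A x) (finv a mn k off x)"
    proof (intro allI impI)
      fix x assume Yx: "Y x"
      define ys where "ys = finv a mn k off x"
      define D where "D i = base a k off i x div \<bar>a i\<bar>" for i
      have b1: "base a k off 1 x mod \<bar>a 1\<bar> = 0" using Yx unfolding Y_def by simp
      have sumb0: "i \<le> k \<longrightarrow> base a k off i x = (\<Sum>j = 1..i. \<bar>a j\<bar> * D j)" if "1 \<le> i" for i
        using that
      proof (induction i rule: dec_induct)
        case base
        have "base a k off 1 x = \<bar>a 1\<bar> * D 1"
          using b1 unfolding D_def by (metis add.right_neutral div_mult_mod_eq mult.commute)
        then show ?case by simp
      next
        case (step n)
        show ?case
        proof
          assume "Suc n \<le> k"
          then have "base a k off (Suc n) x = \<bar>a (Suc n)\<bar> * D (Suc n) + base a k off n x"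
            using bsimp[of n x] unfolding D_def by (simp add: div_mult_mod_eq)
          then show "base a k off (Suc n) x = (\<Sum>j = 1..Suc n. \<bar>a j\<bar> * D j)"
            using step \<open>Suc n \<le> k\<close> by (simp add: sum.cl_ivl_Suc)
        qed
      qed
      have sumb: "base a k off i x = (\<Sum>j = 1..i. \<bar>a j\<bar> * D j)" if "1 \<le> i" "i \<le> k" for i
        using sumb0 that by blast
      have Xys: "X ys"
      proof -
        have "C ys" using Yx unfolding Y_def ys_def by simp
        moreover have "\<forall>i\<in>{1..k}. mn i \<le> ys ! (i - 1)"
        proof
          fix i assume i: "i \<in> {1..k}"
          have "base a k off i x div \<bar>a i\<bar> \<ge> 0" using bnn[of i x] i by (simp add: pos_imp_zdiv_nonneg_iff div_int_pos_iff)
          then show "mn i \<le> ys ! (i - 1)" using finv_nth[of i x] i unfolding ys_def by simp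
        qed
        moreover have "ys ! (k - 1) < mx"
        proof -
          have ak: "(a k > 0 \<longleftrightarrow> a 1 > 0) \<and> a k \<noteq> 0" using sgp[of k] anz k1 by auto
          have akp: "\<bar>a k\<bar> > 0" using anz k1 by auto
          have "\<bar>x - off\<bar> < \<bar>a k\<bar> * nk"
          proof -
            have a1: "a 1 \<noteq> 0" using anz k1 by auto
            show ?thesis
            proof (cases "a 1 > 0")
              case True
              then have "a k > 0" "0 \<le> x - off \<and> x - off < a k * nk" using ak Yx unfolding Y_def by auto
              then show ?thesis by simp
            next
              case False
              then have "a 1 < 0" using a1 by simp
              then have "a k < 0" "a k * nk < x - off \<and> x - off \<le> 0" using ak Yx unfolding Y_def by auto
              then show ?thesis by simp
            qed
          qed
          then have "\<bar>x - off\<bar> div \<bar>a k\<bar> < nk" using akp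
          proof -
            have "\<bar>x - off\<bar> div \<bar>a k\<bar> * \<bar>a k\<bar> \<le> \<bar>x - off\<bar>"
              using div_mult_mod_eq[of "\<bar>x - off\<bar>" "\<bar>a k\<bar>"] pos_mod_sign[OF akp, of "\<bar>x - off\<bar>"] by linarith
            then have "\<bar>x - off\<bar> div \<bar>a k\<bar> * \<bar>a k\<bar> < nk * \<bar>a k\<bar>"
              using \<open>\<bar>x - off\<bar> < \<bar>a k\<bar> * nk\<close> by (simp add: mult.commute)
            then show ?thesis using akp by (meson mult_right_less_imp_less order_less_imp_le)
          qed
          then show ?thesis using finv_nth[of k x] k1 bk[of x] unfolding ys_def nk_def by simp
        qed
        ultimately show ?thesis unfolding X_def by simp
      qed
      have fys: "f ys = x"
      proof -
        have "f ys = (\<Sum>i = 1..k. a i * (D i + mn i)) + b"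
          unfolding f_def ys_def D_def using finv_nth by (auto intro!: sum.cong)
        also have "\<dots> = (\<Sum>i = 1..k. a i * D i) + off"
          unfolding off_def by (simp add: sum.distrib algebra_simps)
        also have "(\<Sum>i = 1..k. a i * D i) = sg * (\<Sum>i = 1..k. \<bar>a i\<bar> * D i)"
          unfolding sum_distrib_left
          by (rule sum.cong) (simp, metis atLeastAtMost_iff mult.assoc sgn_i)
        also have "\<dots> = sg * \<bar>x - off\<bar>" using sumb[of k] k1 bk by simp
        also have "sg * \<bar>x - off\<bar> = x - off"
          using Yx anz k1 unfolding Y_def sg_def by auto
        finally show ?thesis by simp
      qed
      show "R (A x) (finv a mn k off x)"
        using L[rule_format, of ys] Xys fys len unfolding ys_def by simp
    qed
  next
    assume Rt: "\<forall>x. Y x \<longrightarrow> R (A x) (finv a mn k off x)"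
    show "\<forall>xs. length xs = k \<and> X xs \<longrightarrow> R (A (f xs)) xs"
    proof (intro allI impI)
      fix xs assume H: "length xs = k \<and> X xs"
      define d where "d j = xs ! (j - 1) - mn j" for j
      define S where "S i = (\<Sum>j = 1..i. \<bar>a j\<bar> * d j)" for i
      have dnn: "d j \<ge> 0" if "1 \<le> j" "j \<le> k" for j
        using H that unfolding X_def d_def by auto
      have Snn: "S i \<ge> 0" if "i \<le> k" for i
        unfolding S_def using dnn that by (intro sum_nonneg) auto
      have Slt: "S i < \<bar>a (Suc i)\<bar>" if "i < k" for i
      proof (cases "i = 0")
        case True then show ?thesis using anz k1 unfolding S_def by auto
      next
        case False then show ?thesis using abd[rule_format, of i xs] H that
          unfolding S_def d_def by simp
      qed
      have SSuc: "S (Suc i) = S i + \<bar>a (Suc i)\<bar> * d (Suc i)" for i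
        unfolding S_def by (simp add: sum.cl_ivl_Suc)
      define x where "x = f xs"
      have xo: "x - off = sg * S k"
      proof -
        have "x - off = (\<Sum>i = 1..k. a i * d i)"
          unfolding x_def f_def off_def d_def by (simp add: sum_subtractf[symmetric] algebra_simps)
        also have "\<dots> = sg * S k" unfolding S_def sum_distrib_left
          by (rule sum.cong) (simp, metis atLeastAtMost_iff mult.assoc sgn_i)
        finally show ?thesis .
      qed
      have absx: "\<bar>x - off\<bar> = S k" using xo Snn[of k] unfolding sg_def by auto
      have bS: "base a k off i x = S i" if "i \<le> k" for i
        using that
      proof (induction i rule: inc_induct)
        case base then show ?case using bk absx by simp
      next
        case (step n)
        have "base a k off n x = S (Suc n) mod \<bar>a (Suc n)\<bar>" using bsimp[of n x] step by simp
        also have "\<dots> = S n mod \<bar>a (Suc n)\<bar>" using SSuc[of n] by simp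
        also have "\<dots> = S n" using Snn[of n] Slt[of n] step by simp
        finally show ?case .
      qed
      have Sdiv: "S i div \<bar>a i\<bar> = d i" if "1 \<le> i" "i \<le> k" for i
      proof -
        obtain m where m: "i = Suc m" using \<open>1 \<le> i\<close> by (cases i) auto
        have e: "S i = S m + \<bar>a i\<bar> * d i" using SSuc[of m] unfolding m .
        have "0 \<le> S m" "S m < \<bar>a i\<bar>" using Snn[of m] Slt[of m] m that by auto
        then have "S m div \<bar>a i\<bar> = 0" by (rule div_pos_pos_trivial)
        moreover have "\<bar>a i\<bar> \<noteq> 0" using anz that by auto
        ultimately show ?thesis unfolding e by simp
      qed
      have finvx: "finv a mn k off x = xs"
      proof (rule nth_equalityI)
        show "length (finv a mn k off x) = length xs" using len H by simp
      next
        fix j assume "j < length (finv a mn k off x)"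
        then have j: "j < k" using len by simp
        have "finv a mn k off x ! (Suc j - 1) = base a k off (Suc j) x div \<bar>a (Suc j)\<bar> + mn (Suc j)"
          using finv_nth[of "Suc j" x] j by simp
        also have "\<dots> = d (Suc j) + mn (Suc j)" using bS[of "Suc j"] Sdiv[of "Suc j"] j by simp
        also have "\<dots> = xs ! j" unfolding d_def by simp
        finally show "finv a mn k off x ! j = xs ! j" by simp
      qed
      have Yx: "Y x"
      proof -
        have "C (finv a mn k off x)" using finvx H unfolding X_def by simp
        moreover have "base a k off 1 x mod \<bar>a 1\<bar> = 0"
          using bS[of 1] k1 unfolding S_def by simp
        moreover have Sk: "S k < \<bar>a k\<bar> * nk"
        proof -
          obtain m where m: "k = Suc m" using k1 by (cases k) auto
          have "d k < nk" using H unfolding X_def d_def nk_def by simp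
          then have "d k \<le> nk - 1" by simp
          then have "\<bar>a k\<bar> * d k \<le> \<bar>a k\<bar> * (nk - 1)" by (simp add: mult_left_mono)
          moreover have "S m < \<bar>a k\<bar>" using Slt[of m] m by simp
          ultimately have "S k < \<bar>a k\<bar> + \<bar>a k\<bar> * (nk - 1)" using SSuc[of m] m by simp
          then show ?thesis by (simp add: algebra_simps)
        qed
        moreover have "(a k > 0 \<longleftrightarrow> a 1 > 0) \<and> a k \<noteq> 0" using sgp[of k] anz k1 by auto
        ultimately show ?thesis unfolding Y_def using xo Snn[of k] unfolding sg_def
          by (auto split: if_splits)
      qed
      show "R (A (f xs)) xs" using Rt[rule_format, OF Yx] finvx unfolding x_def by simp
    qed
  qed
qed

end
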